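(* Let $A\subseteq\mathbb{N}$ and $\alpha\ge-1$. For every $x\in[\underline{d}_\alpha(A),\overline{d}_\alpha(A)]$ there is a free ultrafilter $\mathcal{F}$ on $\mathbb{N}$ such that $\mu_\alpha^{\mathcal{F}}(A)=x$.
   Context: $\mathbb{N}=\{1,2,3,\dots\}$. For $\alpha\ge-1$ and $A\subseteq\mathbb{N}$ put $A_\alpha(n)=\sum_{k=1}^n\chi_A(k)k^\alpha$ (so $\mathbb{N}_\alpha(n)=\sum_{k=1}^nk^\alpha$), $\underline{d}_\alpha(A)=\liminf_{n\to\infty}\frac{A_\alpha(n)}{\mathbb{N}_\alpha(n)}$ and $\overline{d}_\alpha(A)=\limsup_{n\to\infty}\frac{A_\alpha(n)}{\mathbb{N}_\alpha(n)}$. For a free ultrafilter $\mathcal{F}$ and a bounded real sequence $(x_n)$, $\mathcal{F}\text{-}\lim x_n$ is the unique real $L$ with $\{n;|x_n-L|<\varepsilon\}\in\mathcal{F}$ for every $\varepsilon>0$. Define $\mu_\alpha^{\mathcal{F}}(A)=\mathcal{F}\text{-}\lim\frac{A_\alpha(n)}{\mathbb{N}_\alpha(n)}$. *)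

theory Defs
  imports "HOL-Analysis.Analysis"
begin

definition wcount :: "real \<Rightarrow> nat set \<Rightarrow> nat \<Rightarrow> real" where
  "wcount \<alpha> A n = (\<Sum>k=1..n. (if k \<in> A then 1 else 0) * real k powr \<alpha>)"

definition wratio :: "real \<Rightarrow> nat set \<Rightarrow> nat \<Rightarrow> real" where
  "wratio \<alpha> A n = wcount \<alpha> A n / wcount \<alpha> UNIV n"

definition lower_wdens :: "real \<Rightarrow> nat set \<Rightarrow> ereal" where
  "lower_wdens \<alpha> A = liminf (\<lambda>n. ereal (wratio \<alpha> A n))"

definition upper_wdens :: "real \<Rightarrow> nat set \<Rightarrow> ereal" where
  "upper_wdens \<alpha> A = limsup (\<lambda>n. ereal (wratio \<alpha> A n))"

definition free_ultrafilter :: "nat set set \<Rightarrow> bool" where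
  "free_ultrafilter F \<longleftrightarrow>
     UNIV \<in> F \<and> {} \<notin> F \<and>
     (\<forall>X Y. X \<in> F \<longrightarrow> X \<subseteq> Y \<longrightarrow> Y \<in> F) \<and>
     (\<forall>X Y. X \<in> F \<longrightarrow> Y \<in> F \<longrightarrow> X \<inter> Y \<in> F) \<and>
     (\<forall>X. X \<in> F \<or> - X \<in> F) \<and>
     (\<forall>X. finite X \<longrightarrow> X \<notin> F)"

definition F_lim :: "nat set set \<Rightarrow> (nat \<Rightarrow> real) \<Rightarrow> real" where
  "F_lim F x = (THE L. \<forall>\<epsilon>>0. {n. \<bar>x n - L\<bar> < \<epsilon>} \<in> F)"

definition mu_F :: "nat set set \<Rightarrow> real \<Rightarrow> nat set \<Rightarrow> real" where
  "mu_F F \<alpha> A = F_lim F (wratio \<alpha> A)"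

end

theory Submission
  imports Defs
begin

lemma ultra_exists:
  fixes F :: "'a filter"
  assumes F: "F \<noteq> bot"
  shows "\<exists>U. U \<le> F \<and> U \<noteq> bot \<and> (\<forall>P. eventually P U \<or> eventually (\<lambda>x. \<not> P x) U)"
proof -
  let ?X = "{G. G \<noteq> bot \<and> G \<le> F}"
  let ?R = "{(b, a). a \<noteq> bot \<and> a \<le> b \<and> b \<le> F}"
  have bot_notin_R: "c \<in> Chains ?R \<Longrightarrow> bot \<notin> c" for c
    by (auto simp: Chains_def)
  have [simp]: "Field ?R = ?X"
    by (auto simp: Field_def bot_unique)
  have "\<exists>m\<in>Field ?R. \<forall>a\<in>Field ?R. (m, a) \<in> ?R \<longrightarrow> a = m"
  proof (rule Zorns_po_lemma)
    show "Partial_order ?R"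
      by (auto simp: partial_order_on_def preorder_on_def
          antisym_def refl_on_def trans_def Field_def bot_unique)
    show "\<exists>u\<in>Field ?R. \<forall>a\<in>C. (a, u) \<in> ?R" if C: "C \<in> Chains ?R" for C
    proof (simp, intro exI conjI ballI)
      have Inf_C: "Inf C \<noteq> bot" "Inf C \<le> F" if "C \<noteq> {}"
      proof -
        from C that have "Inf C = bot \<longleftrightarrow> (\<exists>x\<in>C. x = bot)"
          unfolding trivial_limit_def by (intro eventually_Inf_base) (auto simp: Chains_def)
        with C show "Inf C \<noteq> bot"
          by (simp add: bot_notin_R)
        from that obtain x where "x \<in> C" by auto
        with C show "Inf C \<le> F"
          by (auto intro!: Inf_lower2[of x] simp: Chains_def)
      qed
      then have [simp]: "inf F (Inf C) = (if C = {} then F else Inf C)"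
        using C by (auto simp add: inf_absorb2)
      from C show "inf F (Inf C) \<noteq> bot"
        by (simp add: F Inf_C)
      from C show "inf F (Inf C) \<le> F"
        by (simp add: Chains_def Inf_C F)
      with C show "inf F (Inf C) \<le> x" "x \<le> F" if "x \<in> C" for x
        using that by (auto intro: Inf_lower simp: Chains_def)
    qed
  qed
  then obtain U where U: "U \<noteq> bot" "U \<le> F"
    and max: "\<And>G. G \<noteq> bot \<Longrightarrow> G \<le> U \<Longrightarrow> G = U"
    by auto
  have "eventually P U \<or> eventually (\<lambda>x. \<not> P x) U" for P
  proof (rule disjCI)
    assume "\<not> eventually (\<lambda>x. \<not> P x) U"
    then have "inf U (principal {x. P x}) \<noteq> bot"
      by (simp add: trivial_limit_def eventually_inf_principal)
    then have E: "inf U (principal {x. P x}) = U"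
      by (rule max) simp
    show "eventually P U"
      by (subst E[symmetric]) (simp add: eventually_inf_principal)
  qed
  with U show ?thesis by blast
qed



lemma wcount_nonneg: "0 \<le> wcount \<alpha> A n"
  unfolding wcount_def by (intro sum_nonneg) auto

lemma wcount_le: "wcount \<alpha> A n \<le> wcount \<alpha> UNIV n"
  unfolding wcount_def by (intro sum_mono) auto

lemma wcount_UNIV_pos: "n \<ge> 1 \<Longrightarrow> 0 < wcount \<alpha> UNIV n"
  unfolding wcount_def by (intro sum_pos) auto

lemma wcount_Suc: "wcount \<alpha> A (Suc n) = wcount \<alpha> A n + (if Suc n \<in> A then 1 else 0) * real (Suc n) powr \<alpha>"
  unfolding wcount_def by (simp add: sum.nat_ivl_Suc')

lemma step_bound:
  fixes a b c d :: real
  assumes "0 \<le> a" "a \<le> b" "0 < b" "0 < c" "d = 0 \<or> d = 1"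
  shows "\<bar>(a + d * c) / (b + c) - a / b\<bar> \<le> c / (b + c)"
  using assms(5)
proof
  assume "d = 0"
  have "a / b - a / (b + c) = a * c / (b * (b + c))" using assms by (simp add: field_simps)
  also have "\<dots> = (a / b) * (c / (b + c))" by simp
  also have "\<dots> \<le> 1 * (c / (b + c))"
    using assms by (intro mult_right_mono) auto
  also have "\<dots> = c / (b + c)" by simp
  finally show ?thesis using \<open>d = 0\<close> assms by (simp add: frac_le)
next
  assume "d = 1"
  have "(a + c) / (b + c) - a / b = c * (b - a) / (b * (b + c))" using assms by (simp add: field_simps)
  also have "\<dots> = ((b - a) / b) * (c / (b + c))" by simp
  also have "\<dots> \<le> 1 * (c / (b + c))"
    using assms by (intro mult_right_mono) auto
  also have "\<dots> = c / (b + c)" by simp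
  finally have 1: "(a + c) / (b + c) - a / b \<le> c / (b + c)" .
  have "0 \<le> c * (b - a) / (b * (b + c))" using assms by simp
  then have "0 \<le> (a + c) / (b + c) - a / b" using \<open>(a + c) / (b + c) - a / b = c * (b - a) / (b * (b + c))\<close> by simp
  with 1 \<open>d = 1\<close> show ?thesis by simp
qed

lemma ratio_bound:
  assumes "N \<ge> 1"
  shows "real N powr \<alpha> / wcount \<alpha> UNIV N \<le> (if \<alpha> \<le> 0 then 1 else 2 * 2 powr \<alpha>) / real N"
proof -
  have W: "0 < wcount \<alpha> UNIV N" using assms by (rule wcount_UNIV_pos)
  have Np: "0 < real N" using assms by simp
  show ?thesis
  proof (cases "\<alpha> \<le> 0")
    case True
    have "real N * real N powr \<alpha> = (\<Sum>k=1..N. real N powr \<alpha>)" by simp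
    also have "\<dots> \<le> (\<Sum>k=1..N. real k powr \<alpha>)"
      by (intro sum_mono powr_mono2') (use True in auto)
    also have "\<dots> = wcount \<alpha> UNIV N" by (simp add: wcount_def)
    finally have "real N * real N powr \<alpha> \<le> wcount \<alpha> UNIV N" .
    then show ?thesis using True W Np by (simp add: field_simps)
  next
    case False
    define M where "M = (N + 1) div 2"
    have M1: "1 \<le> M" using assms by (simp add: M_def)
    have "real (N + 1 - M) * (real N / 2) powr \<alpha> = (\<Sum>k=M..N. (real N / 2) powr \<alpha>)" by simp
    also have "\<dots> \<le> (\<Sum>k=M..N. real k powr \<alpha>)"
    proof (intro sum_mono powr_mono2)
      fix k assume "k \<in> {M..N}"
      then have "M \<le> k" by simp
      moreover have "real N \<le> 2 * real M" unfolding M_def by linarith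
      ultimately show "real N / 2 \<le> real k" by linarith
    qed (use False in auto)
    also have "\<dots> \<le> (\<Sum>k=1..N. real k powr \<alpha>)"
      by (intro sum_mono2) (use M1 in auto)
    also have "\<dots> = wcount \<alpha> UNIV N" by (simp add: wcount_def)
    finally have 1: "real (N + 1 - M) * (real N / 2) powr \<alpha> \<le> wcount \<alpha> UNIV N" .
    have "real N / 2 \<le> real (N + 1 - M)" unfolding M_def by linarith
    then have "real N / 2 * (real N / 2) powr \<alpha> \<le> real (N + 1 - M) * (real N / 2) powr \<alpha>"
      by (intro mult_right_mono) auto
    with 1 have 2: "real N / 2 * (real N powr \<alpha> / 2 powr \<alpha>) \<le> wcount \<alpha> UNIV N"
      by (simp add: powr_divide)
    have p: "0 < 2 powr \<alpha>" by simp
    show ?thesis using False 2 W Np p by (simp add: field_simps)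
  qed
qed


theorem corollary4p2:
  fixes A :: "nat set" and \<alpha> x :: real
  assumes "\<alpha> \<ge> -1"
    and "lower_wdens \<alpha> A \<le> ereal x" and "ereal x \<le> upper_wdens \<alpha> A"
  shows "\<exists>F. free_ultrafilter F \<and> mu_F F \<alpha> A = x"
proof -
  define w where "w = wratio \<alpha> A"
  have diff: "\<exists>N0. \<forall>n\<ge>N0. \<bar>w (Suc n) - w n\<bar> < e" if e: "e > 0" for e
  proof -
    define C where "C = (if \<alpha> \<le> 0 then 1 else 2 * 2 powr \<alpha>)"
    have Cp: "C > 0" by (simp add: C_def)
    obtain K :: nat where K: "C / e < real K" using reals_Archimedean2 by blast
    have CK: "C < e * real K" using K e by (simp add: pos_divide_less_eq mult.commute)
    show ?thesis
    proof (intro exI allI impI)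
      fix n assume n: "Suc K \<le> n"
      define a where "a = wcount \<alpha> A n"
      define b where "b = wcount \<alpha> UNIV n"
      define c where "c = real (Suc n) powr \<alpha>"
      define d :: real where "d = (if Suc n \<in> A then 1 else 0)"
      have b: "0 < b" using n by (simp add: b_def wcount_UNIV_pos)
      have c: "0 < c" by (simp add: c_def)
      have a0: "0 \<le> a" by (simp add: a_def wcount_nonneg)
      have ab: "a \<le> b" by (simp add: a_def b_def wcount_le)
      have d: "d = 0 \<or> d = 1" by (simp add: d_def)
      have "w (Suc n) = (a + d * c) / (b + c)"
        by (simp add: w_def wratio_def wcount_Suc a_def b_def c_def d_def)
      moreover have "w n = a / b" by (simp add: w_def wratio_def a_def b_def)
      ultimately have "\<bar>w (Suc n) - w n\<bar> \<le> c / (b + c)"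
        using step_bound[OF a0 ab b c d] by simp
      also have "c / (b + c) = real (Suc n) powr \<alpha> / wcount \<alpha> UNIV (Suc n)"
        by (simp add: c_def b_def wcount_Suc)
      also have "\<dots> \<le> C / real (Suc n)" using ratio_bound[of "Suc n" \<alpha>] by (simp add: C_def)
      also have "\<dots> < e"
      proof -
        have "e * real K \<le> e * real (Suc n)" using n e by simp
        with CK have "C < e * real (Suc n)" by linarith
        then show ?thesis by (simp add: pos_divide_less_eq)
      qed
      finally show "\<bar>w (Suc n) - w n\<bar> < e" .
    qed
  qed
  have freq_lo: "\<exists>n\<ge>N. w n < x + e" if e: "e > 0" for e N
  proof (rule ccontr)
    assume "\<not> (\<exists>n\<ge>N. w n < x + e)"
    then have h: "\<forall>n\<ge>N. x + e \<le> w n" by (auto simp: not_less)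
    have "ereal (x + e) \<le> lower_wdens \<alpha> A"
      unfolding lower_wdens_def le_Liminf_iff
    proof (intro allI impI)
      fix y assume y: "y < ereal (x + e)"
      show "eventually (\<lambda>n. y < ereal (wratio \<alpha> A n)) sequentially"
        unfolding eventually_sequentially
      proof (intro exI allI impI)
        fix n assume "N \<le> n"
        then have "ereal (x + e) \<le> ereal (wratio \<alpha> A n)" using h by (simp add: w_def)
        then show "y < ereal (wratio \<alpha> A n)" using y by (meson less_le_trans)
      qed
    qed
    with assms(2) have "ereal (x + e) \<le> ereal x" by (meson order_trans)
    with e show False by simp
  qed
  have freq_hi: "\<exists>n\<ge>N. x - e < w n" if e: "e > 0" for e N
  proof (rule ccontr)
    assume "\<not> (\<exists>n\<ge>N. x - e < w n)"
    then have h: "\<forall>n\<ge>N. w n \<le> x - e" by (auto simp: not_less)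
    have "upper_wdens \<alpha> A \<le> ereal (x - e)"
      unfolding upper_wdens_def Limsup_le_iff
    proof (intro allI impI)
      fix y assume y: "y > ereal (x - e)"
      show "eventually (\<lambda>n. y > ereal (wratio \<alpha> A n)) sequentially"
        unfolding eventually_sequentially
      proof (intro exI allI impI)
        fix n assume "N \<le> n"
        then have "ereal (wratio \<alpha> A n) \<le> ereal (x - e)" using h by (simp add: w_def)
        then show "y > ereal (wratio \<alpha> A n)" using y by (meson le_less_trans)
      qed
    qed
    with assms(3) have "ereal x \<le> ereal (x - e)" by (meson order_trans)
    with e show False by simp
  qed
  have cluster: "\<exists>n\<ge>N. \<bar>w n - x\<bar> < e" if e: "e > 0" for e N
  proof -
    obtain N0 where N0: "\<And>n. n \<ge> N0 \<Longrightarrow> \<bar>w (Suc n) - w n\<bar> < e" using diff[OF e] by blast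
    obtain m where m: "m \<ge> max N N0" "w m < x + e" using freq_lo[OF e] by blast
    obtain p where p: "p \<ge> m" "x - e < w p" using freq_hi[OF e] by blast
    have key: "x - e < w (m + d) \<Longrightarrow> \<exists>q\<ge>m. \<bar>w q - x\<bar> < e" for d
    proof (induction d)
      case 0
      then show ?case using m(2) by (intro exI[of _ m]) auto
    next
      case (Suc d)
      show ?case
      proof (cases "x - e < w (m + d)")
        case True
        then show ?thesis using Suc.IH by blast
      next
        case False
        have "\<bar>w (Suc (m + d)) - w (m + d)\<bar> < e" using N0 m(1) by simp
        then have "\<bar>w (m + Suc d) - x\<bar> < e" using False Suc.prems by auto
        then show ?thesis by (intro exI[of _ "m + Suc d"]) auto
      qed
    qed
    from key[of "p - m"] p obtain q where "q \<ge> m" "\<bar>w q - x\<bar> < e" by auto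
    with m(1) show ?thesis by (intro exI[of _ q]) auto
  qed
  define G0 where "G0 = inf sequentially (filtercomap w (nhds x))"
  have G0: "G0 \<noteq> bot"
  proof
    assume "G0 = bot"
    then have "eventually (\<lambda>_. False) G0" by simp
    then obtain P Q where P: "eventually P sequentially"
      and Q: "eventually Q (filtercomap w (nhds x))" and PQ: "\<forall>n. P n \<and> Q n \<longrightarrow> False"
      unfolding G0_def eventually_inf by blast
    from P obtain N where N: "\<forall>n\<ge>N. P n" by (auto simp: eventually_sequentially)
    from Q obtain S where S: "open S" "x \<in> S" "\<forall>n. w n \<in> S \<longrightarrow> Q n"
      by (auto simp: eventually_filtercomap_nhds)
    then obtain e where e: "e > 0" "ball x e \<subseteq> S" using open_contains_ball by blast
    obtain n where n: "n \<ge> N" "\<bar>w n - x\<bar> < e" using cluster[OF e(1)] by blast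
    then have "w n \<in> ball x e" by (simp add: dist_real_def abs_minus_commute)
    with e S N n PQ show False by blast
  qed
  obtain U where U: "U \<le> G0" "U \<noteq> bot"
    and ultra: "\<And>P. eventually P U \<or> eventually (\<lambda>x. \<not> P x) U"
    using ultra_exists[OF G0] by blast
  have Useq: "U \<le> sequentially" using U(1) unfolding G0_def by (meson inf_le1 order_trans)
  have Ucomap: "U \<le> filtercomap w (nhds x)" using U(1) unfolding G0_def by (meson inf_le2 order_trans)
  define F where "F = {X. eventually (\<lambda>n. n \<in> X) U}"
  have inF: "{n. \<bar>w n - x\<bar> < e} \<in> F" if e: "e > 0" for e
  proof -
    have "eventually (\<lambda>y. dist y x < e) (nhds x)"
      using e by (auto simp: eventually_nhds_metric)
    then have "eventually (\<lambda>n. dist (w n) x < e) (filtercomap w (nhds x))"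
      by (rule eventually_filtercomapI)
    then have "eventually (\<lambda>n. dist (w n) x < e) U" using Ucomap filter_leD by blast
    then show ?thesis by (simp add: F_def dist_real_def)
  qed
  have emp: "{} \<notin> F" using U(2) by (simp add: F_def eventually_False)
  have int: "X \<inter> Y \<in> F" if "X \<in> F" "Y \<in> F" for X Y
    using that unfolding F_def by (auto intro: eventually_conj)
  have fu: "free_ultrafilter F"
    unfolding free_ultrafilter_def
  proof (intro conjI allI impI)
    show "UNIV \<in> F" by (simp add: F_def)
    show "{} \<notin> F" by (rule emp)
    show "Y \<in> F" if "X \<in> F" "X \<subseteq> Y" for X Y
      using that unfolding F_def by (auto elim: eventually_mono)
    show "X \<inter> Y \<in> F" if "X \<in> F" "Y \<in> F" for X Y using int that by blast
    show "X \<in> F \<or> - X \<in> F" for X using ultra[of "\<lambda>n. n \<in> X"] by (simp add: F_def)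
    show "X \<notin> F" if "finite X" for X
    proof
      assume "X \<in> F"
      have "eventually (\<lambda>n. n \<notin> X) cofinite" using that by (simp add: eventually_cofinite)
      then have "eventually (\<lambda>n. n \<notin> X) U" using Useq
        by (simp add: cofinite_eq_sequentially filter_leD)
      then have "- X \<in> F" by (simp add: F_def)
      with \<open>X \<in> F\<close> have "X \<inter> - X \<in> F" by (rule int)
      with emp show False by simp
    qed
  qed
  have "F_lim F w = x"
    unfolding F_lim_def
  proof (rule the_equality)
    show "\<forall>e>0. {n. \<bar>w n - x\<bar> < e} \<in> F" using inF by blast
  next
    fix L assume L: "\<forall>e>0. {n. \<bar>w n - L\<bar> < e} \<in> F"
    show "L = x"
    proof (rule ccontr)
      assume "L \<noteq> x"
      define e where "e = \<bar>L - x\<bar> / 2"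
      have e: "e > 0" using \<open>L \<noteq> x\<close> by (simp add: e_def)
      have "{n. \<bar>w n - L\<bar> < e} \<inter> {n. \<bar>w n - x\<bar> < e} \<in> F"
        using L inF e int by blast
      moreover have "{n. \<bar>w n - L\<bar> < e} \<inter> {n. \<bar>w n - x\<bar> < e} = {}"
        by (auto simp: e_def abs_if split: if_splits)
      ultimately show False using emp by simp
    qed
  qed
  then have "mu_F F \<alpha> A = x" by (simp add: mu_F_def w_def)
  with fu show ?thesis by blast
qed

end
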